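(* For $0<\alpha<1$ let $$u(\alpha)=\int_{\alpha}^{1}\frac{(1-\rho^2)^{\frac{2m-1}{2}}}{\{1-(1-\rho^2)^m\}^{\frac{2m-1}{2m}}}\,d\rho .$$ Then $u$ is finite on $(0,1)$, $u(\alpha)\to0$ and $u'(\alpha)\to0$ as $\alpha\to1^-$, and $u(\alpha)\to+\infty$ as $\alpha\to0^+$. The rotational surfaces $(\alpha\cos v,\alpha\sin v,\pm u(\alpha))$, $0<\alpha<1$, have constant Minkowski Gaussian curvature $-1$.
   Context: Fix an integer $m\ge 2$. Let $\Phi(x_1,x_2,x_3)=(x_1^2+x_2^2)^m+x_3^{2m}$ and let $\|\cdot\|$ be the norm on $\mathbb{R}^3$ whose unit sphere is $S=\{x\in\mathbb{R}^3:\Phi(x)=1\}$ (a smooth, strictly convex surface). For a surface given by a parametrization $f(s,v)$, its Birkhoff–Gauss map $\eta$ is the map into $S$ defined by requiring $\eta\in S$ and $\nabla\Phi(\eta)=\mu\, f_s\times f_v$ for some function $\mu>0$, where $\times$ is the standard cross product (so the tangent plane of $S$ at $\eta(p)$ is parallel to $T_pM$, and $d\eta_p$ is an endomorphism of $T_pM$). The Minkowski Gaussian curvature is $K=\det(d\eta_p)$ (independent of orientation). *)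

theory Defs
  imports "HOL-Analysis.Analysis"
begin

text \<open>The gauge function Phi(x) = (x1^2+x2^2)^m + x3^(2m); the unit sphere S is Phi = 1.\<close>
definition Phi :: "nat \<Rightarrow> real^3 \<Rightarrow> real" where
  "Phi m x = ((x$1)^2 + (x$2)^2)^m + (x$3)^(2*m)"

definition d_s :: "(real \<Rightarrow> real \<Rightarrow> real^3) \<Rightarrow> real \<Rightarrow> real \<Rightarrow> real^3" where
  "d_s f s v = vector_derivative (\<lambda>t. f t v) (at s)"

definition d_v :: "(real \<Rightarrow> real \<Rightarrow> real^3) \<Rightarrow> real \<Rightarrow> real \<Rightarrow> real^3" where
  "d_v f s v = vector_derivative (\<lambda>t. f s t) (at v)"

definition bg_map :: "nat \<Rightarrow> (real \<Rightarrow> real \<Rightarrow> real^3) \<Rightarrow> real \<Rightarrow> real \<Rightarrow> real^3" where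
  "bg_map m f s v = (THE y. Phi m y = 1 \<and>
     (\<exists>\<mu>>0. (Phi m has_derivative (\<lambda>h. (\<mu> *\<^sub>R cross3 (d_s f s v) (d_v f s v)) \<bullet> h)) (at y)))"

text \<open>Matrix of d eta_p in the basis (f_s, f_v) of T_pM (columns = images of f_s, f_v),
  and the Minkowski Gaussian curvature K = det(d eta_p).\<close>
definition dbg_matrix :: "nat \<Rightarrow> (real \<Rightarrow> real \<Rightarrow> real^3) \<Rightarrow> real \<Rightarrow> real \<Rightarrow> real^2^2" where
  "dbg_matrix m f s v = (THE M::real^2^2.
      d_s (bg_map m f) s v = M$1$1 *\<^sub>R d_s f s v + M$2$1 *\<^sub>R d_v f s v \<and>
      d_v (bg_map m f) s v = M$1$2 *\<^sub>R d_s f s v + M$2$2 *\<^sub>R d_v f s v)"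

definition mink_gauss_curv :: "nat \<Rightarrow> (real \<Rightarrow> real \<Rightarrow> real^3) \<Rightarrow> real \<Rightarrow> real \<Rightarrow> real" where
  "mink_gauss_curv m f s v = det (dbg_matrix m f s v)"

definition integrand :: "nat \<Rightarrow> real \<Rightarrow> real" where
  "integrand m \<rho> = (1 - \<rho>^2) powr ((2 * real m - 1) / 2) /
      (1 - (1 - \<rho>^2)^m) powr ((2 * real m - 1) / (2 * real m))"

definition u_fun :: "nat \<Rightarrow> real \<Rightarrow> real" where
  "u_fun m \<alpha> = integral {\<alpha>..1} (integrand m)"

end

theory Submission
  imports Defs
begin


lemma integrand_nonneg: "integrand m x \<ge> 0"
  unfolding integrand_def by simp

lemma integrand_cont:
  assumes m: "m \<ge> 1" and a: "0 < a"
  shows "continuous_on {a..1} (integrand m)"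
proof -
  have D: "1 - (1 - x^2)^m > 0" if "x \<in> {a..1}" for x :: real
  proof -
    have x: "0 < x" "x \<le> 1" using that a by auto
    have "0 \<le> 1 - x^2" "1 - x^2 < 1" using x by (auto simp: power_le_one)
    then have "(1 - x^2)^m < 1" using m by (simp add: power_less_one_iff)
    then show ?thesis by simp
  qed
  show ?thesis unfolding integrand_def
  proof (rule continuous_on_divide)
    show "continuous_on {a..1} (\<lambda>x. (1 - x\<^sup>2) powr ((2 * real m - 1) / 2))"
      apply (rule continuous_on_powr')
      using m a by (auto intro!: continuous_intros simp: abs_square_le_1)
    show "continuous_on {a..1} (\<lambda>x. (1 - (1 - x\<^sup>2) ^ m) powr ((2 * real m - 1) / (2 * real m)))"
    proof (rule continuous_on_powr)
      show "\<forall>x\<in>{a..1}. 1 - (1 - x\<^sup>2) ^ m \<noteq> (0::real)" using D by fastforce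
    qed (auto intro!: continuous_intros)
    show "\<forall>x\<in>{a..1}. (1 - (1 - x\<^sup>2) ^ m) powr ((2 * real m - 1) / (2 * real m)) \<noteq> 0"
      using D by fastforce
  qed
qed

lemma integrand_int:
  assumes m: "m \<ge> 1" and a: "0 < a"
  shows "integrand m integrable_on {a..1}"
  using integrable_continuous_real[OF integrand_cont[OF m a]] .

lemma u_deriv:
  assumes m: "m \<ge> 1" and a: "0 < \<alpha>" "\<alpha> < 1"
  shows "(u_fun m has_real_derivative - integrand m \<alpha>) (at \<alpha>)"
proof -
  define a where "a = \<alpha> / 2"
  have a0: "0 < a" "a < \<alpha>" using a by (auto simp: a_def)
  have c: "continuous_on {a..1} (integrand m)" using integrand_cont[OF m a0(1)] .
  have "((\<lambda>x. integral {a..x} (integrand m)) has_real_derivative integrand m \<alpha>) (at \<alpha> within {a..1})"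
    by (rule integral_has_real_derivative[OF c]) (use a0 a in auto)
  moreover have "at \<alpha> within {a..1} = at \<alpha>"
    by (rule at_within_Icc_at) (use a0 a in auto)
  ultimately have d: "((\<lambda>x. integral {a..x} (integrand m)) has_real_derivative integrand m \<alpha>) (at \<alpha>)"
    by simp
  have d2: "((\<lambda>x. integral {a..1} (integrand m) - integral {a..x} (integrand m)) has_real_derivative - integrand m \<alpha>) (at \<alpha>)"
    using DERIV_diff[OF DERIV_const d] by simp
  show ?thesis
  proof (rule has_field_derivative_transform_within_open[OF d2, of "{a<..<1}"])
    fix x assume x: "x \<in> {a<..<1}"
    have "integral {a..x} (integrand m) + integral {x..1} (integrand m) = integral {a..1} (integrand m)"
      by (rule Henstock_Kurzweil_Integration.integral_combine) (use x integrand_int[OF m a0(1)] in auto)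
    then show "integral {a..1} (integrand m) - integral {a..x} (integrand m) = u_fun m x"
      unfolding u_fun_def by simp
  qed (use a0 a in auto)
qed

lemma integrand_1: "integrand m 1 = 0"
  by (simp add: integrand_def)

lemma u_lim1:
  assumes m: "m \<ge> 1"
  shows "(u_fun m \<longlongrightarrow> 0) (at_left 1)"
proof -
  have "continuous_on {1/2..1} (\<lambda>x. integral {x..1} (integrand m))"
    by (rule indefinite_integral_continuous_1'[OF integrand_int[OF m]]) simp
  then have "((\<lambda>x. integral {x..1} (integrand m)) \<longlongrightarrow> integral {1..1} (integrand m)) (at 1 within {1/2..1})"
    unfolding continuous_on_def by (drule_tac x=1 in bspec) auto
  moreover have "at (1::real) within {1/2..1} = at_left 1"
    by (rule at_within_Icc_at_left) simp
  ultimately show ?thesis by (simp add: u_fun_def[abs_def])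
qed

lemma deriv_lim1:
  assumes m: "m \<ge> 1"
  shows "(deriv (u_fun m) \<longlongrightarrow> 0) (at_left 1)"
proof -
  have "continuous_on {1/2..1} (integrand m)"
    by (rule integrand_cont[OF m]) simp
  then have "(integrand m \<longlongrightarrow> integrand m 1) (at 1 within {1/2..1})"
    by (simp add: continuous_on_def)
  moreover have "at (1::real) within {1/2..1} = at_left 1"
    by (rule at_within_Icc_at_left) simp
  ultimately have "(integrand m \<longlongrightarrow> 0) (at_left 1)" by (simp add: integrand_1)
  then have L: "((\<lambda>x. - integrand m x) \<longlongrightarrow> 0) (at_left 1)"
    using tendsto_minus by fastforce
  have "eventually (\<lambda>x. x \<in> {0<..<1::real}) (at_left 1)"
    using eventually_at_left_real[of 0 1] by simp
  then have "eventually (\<lambda>x. - integrand m x = deriv (u_fun m) x) (at_left 1)"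
    by eventually_elim (use u_deriv[OF m] DERIV_imp_deriv in force)
  from tendsto_cong[OF this] L show ?thesis by simp
qed

lemma integrand_lower:
  assumes m: "m \<ge> 1" and r: "0 < \<rho>" "\<rho> \<le> 1/2"
  shows "((3/4) powr ((2 * real m - 1) / 2) / real m) / \<rho> \<le> integrand m \<rho>"
proof -
  define e1 where "e1 = (2 * real m - 1) / 2"
  define e2 where "e2 = (2 * real m - 1) / (2 * real m)"
  define D where "D = 1 - (1 - \<rho>^2)^m"
  have e1: "0 \<le> e1" using m by (simp add: e1_def)
  have e2: "0 \<le> e2" "e2 \<le> 1" "1 \<le> 2 * e2" using m by (auto simp: e2_def field_simps)
  have r2: "\<rho>^2 \<le> 1/4" using r power_mono[of \<rho> "1/2" 2] by (simp add: power2_eq_square)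
  have num: "(3/4) powr e1 \<le> (1 - \<rho>^2) powr e1"
    by (rule powr_mono2) (use e1 r2 in auto)
  have "0 \<le> 1 - \<rho>^2" "1 - \<rho>^2 < 1" using r r2 by auto
  then have "(1 - \<rho>^2)^m < 1" using m by (simp add: power_less_one_iff)
  then have D0: "0 < D" by (simp add: D_def)
  have "1 + real m * (-(\<rho>^2)) \<le> (1 + (-(\<rho>^2)))^m"
    by (rule Bernoulli_inequality) (use r2 in auto)
  then have Dle: "D \<le> real m * \<rho>^2" by (simp add: D_def)
  have "D powr e2 \<le> (real m * \<rho>^2) powr e2"
    by (rule powr_mono2) (use e2 D0 Dle in auto)
  also have "\<dots> = real m powr e2 * \<rho> powr (2 * e2)"
  proof -
    have "(real m * \<rho>^2) powr e2 = real m powr e2 * (\<rho>^2) powr e2"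
      by (rule powr_mult; simp)
    moreover have "\<rho>^2 = \<rho> powr 2" using r by (simp add: powr_realpow')
    moreover have "(\<rho> powr 2) powr e2 = \<rho> powr (2 * e2)" by (simp add: powr_powr)
    ultimately show ?thesis by simp
  qed
  also have "\<dots> \<le> real m * \<rho>"
  proof (rule mult_mono)
    show "real m powr e2 \<le> real m"
      using powr_mono[of e2 1 "real m"] e2 m by simp
    show "\<rho> powr (2 * e2) \<le> \<rho>"
      using powr_mono'[of 1 "2*e2" \<rho>] e2 r by simp
  qed (use r in auto)
  finally have den: "D powr e2 \<le> real m * \<rho>" .
  have Dp: "0 < D powr e2" using D0 by simp
  have "((3/4) powr e1 / real m) / \<rho> = (3/4) powr e1 / (real m * \<rho>)" by simp
  also have "\<dots> \<le> (1 - \<rho>^2) powr e1 / D powr e2"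
    by (rule frac_le) (use num den Dp in auto)
  finally show ?thesis unfolding integrand_def e1_def e2_def D_def .
qed

lemma u_lim0:
  assumes m: "m \<ge> 1"
  shows "filterlim (u_fun m) at_top (at_right 0)"
proof -
  define c where "c = (3/4) powr ((2 * real m - 1) / 2) / real m"
  have c0: "0 < c" using m by (simp add: c_def)
  have low: "c * (ln (1/2) - ln \<alpha>) \<le> u_fun m \<alpha>" if a: "0 < \<alpha>" "\<alpha> < 1/2" for \<alpha>
  proof -
    have int: "integrand m integrable_on {\<alpha>..1}" by (rule integrand_int[OF m a(1)])
    have split: "integral {\<alpha>..1/2} (integrand m) + integral {1/2..1} (integrand m) = u_fun m \<alpha>"
      unfolding u_fun_def
      by (rule Henstock_Kurzweil_Integration.integral_combine) (use a int in auto)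
    have nn: "0 \<le> integral {1/2..1} (integrand m)"
      by (rule integral_nonneg) (use integrand_int[OF m, of "1/2"] integrand_nonneg in auto)
    have fi: "((\<lambda>x. c / x) has_integral (c * ln (1/2) - c * ln \<alpha>)) {\<alpha>..1/2}"
    proof (rule fundamental_theorem_of_calculus)
      show "\<alpha> \<le> 1/2" using a by simp
      fix x assume x: "x \<in> {\<alpha>..1/2}"
      then have "x > 0" using a by auto
      then show "((\<lambda>x. c * ln x) has_vector_derivative c / x) (at x within {\<alpha>..1/2})"
        by (auto intro!: derivative_eq_intros simp: has_real_derivative_iff_has_vector_derivative[symmetric])
    qed
    have "c * (ln (1/2) - ln \<alpha>) = integral {\<alpha>..1/2} (\<lambda>x. c / x)"
      using fi by (simp add: integral_unique algebra_simps)
    also have "\<dots> \<le> integral {\<alpha>..1/2} (integrand m)"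
    proof (rule integral_le)
      show "(\<lambda>x. c / x) integrable_on {\<alpha>..1/2}" using fi by blast
      show "integrand m integrable_on {\<alpha>..1/2}"
        by (rule integrable_subinterval_real[OF int]) (use a in auto)
      fix x assume "x \<in> {\<alpha>..1/2}"
      then show "c / x \<le> integrand m x" using integrand_lower[OF m, of x] a unfolding c_def by auto
    qed
    finally show ?thesis using split nn by linarith
  qed
  have "filterlim (\<lambda>x. - ln x) at_top (at_right (0::real))"
    using ln_at_0 by (simp add: filterlim_uminus_at_bot)
  then have "filterlim (\<lambda>x. ln (1/2) + - ln x) at_top (at_right (0::real))"
    by (rule filterlim_tendsto_add_at_top[OF tendsto_const])
  then have "filterlim (\<lambda>x. c * (ln (1/2) + - ln x)) at_top (at_right (0::real))"
    by (rule filterlim_tendsto_pos_mult_at_top[OF tendsto_const c0])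
  moreover have "eventually (\<lambda>x. c * (ln (1/2) + - ln x) \<le> u_fun m x) (at_right 0)"
    by (rule eventually_mono[OF eventually_at_right_real[of 0 "1/2"]]) (use low in auto)
  ultimately show ?thesis by (rule filterlim_at_top_mono)
qed



lemma vec3_split: "(vector [a, b, c] :: real^3) = a *\<^sub>R vector [1,0,0] + b *\<^sub>R vector [0,1,0] + c *\<^sub>R vector [0,0,1]"
  by (simp add: vec_eq_iff forall_3)

lemma vec3_deriv:
  assumes "(f1 has_real_derivative d1) (at x)" "(f2 has_real_derivative d2) (at x)" "(f3 has_real_derivative d3) (at x)"
  shows "((\<lambda>x. vector [f1 x, f2 x, f3 x] :: real^3) has_vector_derivative vector [d1, d2, d3]) (at x)"
proof -
  have "((\<lambda>x. f1 x *\<^sub>R (vector [1,0,0]::real^3) + f2 x *\<^sub>R vector [0,1,0] + f3 x *\<^sub>R vector [0,0,1]) has_vector_derivative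
     (d1 *\<^sub>R vector [1,0,0] + d2 *\<^sub>R vector [0,1,0] + d3 *\<^sub>R vector [0,0,1])) (at x)"
    using assms by (auto intro!: derivative_eq_intros)
  then show ?thesis by (simp only: vec3_split[symmetric])
qed

definition aa :: "real \<Rightarrow> real" where "aa s = sqrt (1 - s^2)"
definition bb :: "nat \<Rightarrow> real \<Rightarrow> real" where "bb m s = (1 - (1 - s^2)^m) powr (1 / (2 * real m))"

lemma ab_facts:
  assumes m: "m \<ge> 1" and s: "0 < s" "s < 1"
  shows "0 < aa s" "0 < bb m s" "aa s ^ (2*m) + bb m s ^ (2*m) = 1"
    "integrand m s = aa s ^ (2*m-1) / bb m s ^ (2*m-1)"
    "(1 - s^2)^(m-1) = aa s ^ (2*m-2)" "bb m s ^ (2*m) = 1 - (1 - s^2)^m" "0 < 1 - (1 - s^2)^m"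
proof -
  define D where "D = 1 - (1 - s^2)^m"
  have P: "0 < 1 - s^2" "1 - s^2 < 1" using s by (auto simp: power_less_one_iff)
  then have "(1 - s^2)^m < 1" using m by (simp add: power_less_one_iff)
  then have D0: "0 < D" by (simp add: D_def)
  show a0: "0 < aa s" using P by (simp add: aa_def)
  show b0: "0 < bb m s" using D0 by (simp add: bb_def D_def[symmetric])
  have a2: "aa s ^ 2 = 1 - s^2" using P by (simp add: aa_def)
  have apow: "aa s ^ (2*k) = (1 - s^2)^k" for k by (simp add: power_mult a2)
  have bpow: "bb m s ^ k = D powr (real k / (2 * real m))" for k
    using D0 by (simp add: bb_def D_def[symmetric] powr_power)
  show "0 < 1 - (1 - s^2)^m" using D0 by (simp add: D_def)
  have "bb m s ^ (2*m) = D" using bpow[of "2*m"] m D0 by simp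
  then show "bb m s ^ (2*m) = 1 - (1 - s^2)^m" by (simp add: D_def)
  then show "aa s ^ (2*m) + bb m s ^ (2*m) = 1" by (simp add: apow D_def)
  show "(1 - s^2)^(m-1) = aa s ^ (2*m-2)" using apow[of "m-1"] by (simp add: right_diff_distrib')
  have "aa s = (1 - s^2) powr (1/2)" using P by (simp add: aa_def powr_half_sqrt)
  then have "aa s ^ (2*m-1) = (1 - s^2) powr (real (2*m-1) * (1/2))"
    using P by (simp add: powr_power)
  also have "real (2*m-1) * (1/2) = (2 * real m - 1) / 2" using m by (simp add: of_nat_diff)
  finally have an: "aa s ^ (2*m-1) = (1 - s^2) powr ((2 * real m - 1) / 2)" .
  have bn: "bb m s ^ (2*m-1) = D powr ((2 * real m - 1) / (2 * real m))"
    using bpow[of "2*m-1"] m by (simp add: of_nat_diff)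
  show "integrand m s = aa s ^ (2*m-1) / bb m s ^ (2*m-1)"
    unfolding integrand_def an bn D_def ..
qed

lemma aa_deriv:
  assumes s: "0 < s" "s < 1"
  shows "(aa has_real_derivative - s / aa s) (at s)"
proof -
  have P: "0 < 1 - s^2" using s by (auto simp: power_less_one_iff)
  have "((\<lambda>s. sqrt (1 - s^2)) has_real_derivative inverse (sqrt (1 - s^2)) / 2 * (0 - 2 * s)) (at s)"
    by (rule DERIV_chain2[OF DERIV_real_sqrt]) (use P in \<open>auto intro!: derivative_eq_intros\<close>)
  moreover have "inverse (sqrt (1 - s^2)) / 2 * (0 - 2 * s) = - s / aa s"
    by (simp add: aa_def field_simps)
  ultimately show ?thesis by (simp add: aa_def[abs_def])
qed

lemma bb_deriv:
  assumes m: "m \<ge> 1" and s: "0 < s" "s < 1"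
  shows "(bb m has_real_derivative s * aa s ^ (2*m-2) / bb m s ^ (2*m-1)) (at s)"
proof -
  define D where "D = 1 - (1 - s^2)^m"
  note ab = ab_facts[OF m s]
  have D0: "0 < D" using ab(7) by (simp add: D_def)
  have g: "((\<lambda>s. 1 - (1 - s^2)^m) has_real_derivative 0 - real m * (1 - s^2)^(m-1) * (0 - 2 * s)) (at s)"
    by (auto intro!: derivative_eq_intros)
  have d: "(bb m has_real_derivative
      (1 / (2 * real m)) * (1 - (1 - s^2)^m) powr (1 / (2 * real m) - of_nat 1) * (0 - real m * (1 - s^2)^(m-1) * (0 - 2 * s))) (at s)"
    unfolding bb_def[abs_def] by (rule DERIV_fun_powr[OF g]) (use D0 in \<open>simp add: D_def\<close>)
  have P1: "(1 - (1 - s^2)^m) powr (1 / (2 * real m) - of_nat 1) = bb m s / bb m s ^ (2*m)"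
    using D0 ab(6) by (simp add: powr_diff bb_def D_def)
  have P3: "bb m s ^ (2*m) = bb m s * bb m s ^ (2*m-1)"
    using m by (simp add: power_Suc[symmetric] Suc_diff_le[symmetric] del: power_Suc)
  have E: "(1 / (2 * real m)) * (1 - (1 - s^2)^m) powr (1 / (2 * real m) - of_nat 1) * (0 - real m * (1 - s^2)^(m-1) * (0 - 2 * s))
     = s * aa s ^ (2*m-2) / bb m s ^ (2*m-1)"
    unfolding P1 ab(5) P3 using ab(2) m by (simp add: field_simps)
  from d show ?thesis by (simp only: E)
qed



definition gradPhi :: "nat \<Rightarrow> real^3 \<Rightarrow> real^3" where
  "gradPhi m y = vector [2 * real m * ((y$1)^2 + (y$2)^2)^(m-1) * y$1,
                         2 * real m * ((y$1)^2 + (y$2)^2)^(m-1) * y$2,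
                         2 * real m * (y$3)^(2*m-1)]"

lemma Phi_deriv:
  assumes m: "m \<ge> 1"
  shows "(Phi m has_derivative (\<lambda>h. gradPhi m y \<bullet> h)) (at y)"
proof -
  have "((\<lambda>x::real^3. ((x$1)^2 + (x$2)^2)^m + (x$3)^(2*m)) has_derivative
     (\<lambda>h. real m * ((y$1)^2 + (y$2)^2)^(m-1) * (2 * y$1 * h$1 + 2 * y$2 * h$2) + real (2*m) * (y$3)^(2*m-1) * h$3)) (at y)"
    by (auto intro!: derivative_eq_intros bounded_linear.has_derivative[OF bounded_linear_vec_nth] simp: algebra_simps)
  moreover have "(\<lambda>h. real m * ((y$1)^2 + (y$2)^2)^(m-1) * (2 * y$1 * h$1 + 2 * y$2 * h$2) + real (2*m) * (y$3)^(2*m-1) * h$3)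
     = (\<lambda>h. gradPhi m y \<bullet> h)"
    by (rule ext) (simp add: gradPhi_def inner_vec_def sum_3 algebra_simps)
  ultimately show ?thesis by (simp add: Phi_def[abs_def])
qed

lemma inner_eq_vec: 
  fixes p q :: "real^3"
  assumes "(\<lambda>h. p \<bullet> h) = (\<lambda>h. q \<bullet> h)"
  shows "p = q"
proof -
  have "p \<bullet> (p - q) = q \<bullet> (p - q)" using assms by metis
  then have "(p - q) \<bullet> (p - q) = 0" by (simp add: inner_diff_left)
  then show ?thesis by simp
qed

lemma cross_calc:
  "cross3 (vector [c, S, w]) (vector [- s * S, s * c, 0]) = vector [- w * s * c, - w * s * S, s * (c^2 + S^2)]"
  by (simp add: cross3_def vec_eq_iff forall_3 algebra_simps power2_eq_square)

lemma odd_pow_pos: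
  fixes x :: real
  assumes "0 < x ^ (2*k+1)"
  shows "0 < x"
proof (rule ccontr)
  assume "\<not> 0 < x"
  then have "x \<le> 0" by simp
  then have "x ^ (2*k+1) \<le> 0"
    using zero_le_odd_power[of "2*k+1" x] by (cases "x = 0") auto
  with assms show False by simp
qed

lemma sigma_odd: "(\<sigma>::real) = 1 \<or> \<sigma> = -1 \<Longrightarrow> \<sigma> ^ (2*k+1) = \<sigma>"
  by auto

lemma uniq_alg:
  fixes k :: nat and \<sigma> a b \<mu> s c S y1 y2 y3 :: real
  assumes sg: "\<sigma> = 1 \<or> \<sigma> = -1" and a: "0 < a" and b: "0 < b"
    and ab: "a^(2*k+2) + b^(2*k+2) = 1"
    and mu: "0 < \<mu>" and s: "0 < s" and cS: "c^2 + S^2 = 1"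
    and h1: "2 * real (Suc k) * (y1^2 + y2^2)^k * y1 = \<mu> * \<sigma> * (a^(2*k+1) / b^(2*k+1)) * s * c"
    and h2: "2 * real (Suc k) * (y1^2 + y2^2)^k * y2 = \<mu> * \<sigma> * (a^(2*k+1) / b^(2*k+1)) * s * S"
    and h3: "2 * real (Suc k) * y3^(2*k+1) = \<mu> * s"
    and P: "(y1^2 + y2^2)^(Suc k) + y3^(2*k+2) = 1"
  shows "y1 = \<sigma> * a * c \<and> y2 = \<sigma> * a * S \<and> y3 = b"
proof -
  define g where "g = a^(2*k+1) / b^(2*k+1)"
  define K where "K = \<mu> * \<sigma> * g * s"
  define q where "q = y1^2 + y2^2"
  have g0: "0 < g" using a b by (simp add: g_def)
  have s2: "\<sigma>^2 = 1" using sg by auto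
  have K0: "K \<noteq> 0" using g0 mu s sg by (auto simp: K_def)
  have h1': "2 * real (Suc k) * q^k * y1 = K * c" using h1 by (simp add: K_def g_def q_def)
  have h2': "2 * real (Suc k) * q^k * y2 = K * S" using h2 by (simp add: K_def g_def q_def)
  have "0 < y3^(2*k+1)"
  proof -
    have "0 < 2 * real (Suc k) * y3^(2*k+1)" using h3 mu s by simp
    then show ?thesis by (simp add: zero_less_mult_iff)
  qed
  then have y3: "0 < y3" by (rule odd_pow_pos)
  have q0: "q \<noteq> 0"
  proof
    assume "q = 0"
    then have "y1 = 0" "y2 = 0" by (auto simp: q_def)
    then have "K * c = 0" "K * S = 0" using h1' h2' by auto
    then have "c = 0" "S = 0" using K0 by auto
    then show False using cS by simp
  qed
  define t where "t = K / (2 * real (Suc k) * q^k)"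
  have den: "2 * real (Suc k) * q^k \<noteq> 0" using q0 by simp
  have y1t: "y1 = t * c" using h1' den by (simp add: t_def field_simps)
  have y2t: "y2 = t * S" using h2' den by (simp add: t_def field_simps)
  have "q = t^2 * (c^2 + S^2)" by (simp add: q_def y1t y2t power_mult_distrib algebra_simps)
  then have qt: "q = t^2" using cS by simp
  have "2 * real (Suc k) * q^k * t = K" using den by (simp add: t_def)
  then have t1: "2 * real (Suc k) * t^(2*k+1) = K"
    by (simp add: qt power_mult[symmetric] mult.assoc mult.commute)
  have "t^(2*k+1) = \<sigma> * g * y3^(2*k+1)"
  proof -
    have "2 * real (Suc k) * t^(2*k+1) = 2 * real (Suc k) * (\<sigma> * g * y3^(2*k+1))"
      using t1 h3 by (simp add: K_def algebra_simps)
    then show ?thesis by simp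
  qed
  define r where "r = \<sigma> * t"
  have "r^(2*k+1) = \<sigma>^(2*k+1) * t^(2*k+1)" by (simp add: r_def power_mult_distrib)
  also have "\<dots> = \<sigma>^2 * g * y3^(2*k+1)" unfolding sigma_odd[OF sg] \<open>t^(2*k+1) = _\<close> by (simp add: power2_eq_square)
  also have "\<dots> = (a * y3 / b)^(2*k+1)" using s2 by (simp add: g_def power_mult_distrib power_divide)
  finally have r1: "r^(2*k+1) = (a * y3 / b)^(2*k+1)" .
  have ay: "0 < a * y3 / b" using a b y3 by simp
  then have "0 < r^(2*k+1)" unfolding r1 by (rule zero_less_power)
  then have r0: "0 < r" by (rule odd_pow_pos)
  have ra: "r = a * y3 / b"
    using power_inject_base[of r "2*k" "a * y3 / b"] r1 r0 ay by simp
  have "q = r^2" using s2 by (simp add: qt r_def power_mult_distrib)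
  then have "q^(Suc k) = r^(2 * Suc k)" by (simp only: power_mult)
  then have "q^(Suc k) = (a * y3 / b)^(2*k+2)" by (simp add: ra)
  with P have "(a * y3 / b)^(2*k+2) + y3^(2*k+2) = 1" by (simp add: q_def)
  then have "a^(2*k+2) * y3^(2*k+2) / b^(2*k+2) + y3^(2*k+2) = 1"
    by (simp only: power_mult_distrib power_divide)
  moreover have "b^(2*k+2) > 0" using b by simp
  moreover {
    fix n :: nat and A Y B :: real assume "A * Y / B + Y = 1" "B > 0" "A + B = 1"
    then have "A * Y + Y * B = B" by (simp add: field_simps)
    then have "Y * (A + B) = B" by (simp add: distrib_left mult.commute)
    then have "Y = B" using \<open>A + B = 1\<close> by (metis mult_1_right) }
  ultimately have "y3^(2*k+2) = b^(2*k+2)" using ab by blast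
  then have "y3^(Suc (2*k+1)) = b^(Suc (2*k+1))" by simp
  then have y3b: "y3 = b" using power_inject_base y3 b by (metis less_imp_le)
  have "r = a" using ra y3b b by simp
  then have "t = \<sigma> * a" using s2 by (simp add: r_def power2_eq_square) (metis mult.assoc mult_1)
  then show ?thesis using y1t y2t y3b by simp
qed



definition fs :: "nat \<Rightarrow> real \<Rightarrow> real \<Rightarrow> real \<Rightarrow> real^3" where
  "fs m \<sigma> = (\<lambda>s t. vector [s * cos t, s * sin t, \<sigma> * u_fun m s] :: real^3)"

definition eta :: "nat \<Rightarrow> real \<Rightarrow> real \<Rightarrow> real \<Rightarrow> real^3" where
  "eta m \<sigma> s t = vector [\<sigma> * aa s * cos t, \<sigma> * aa s * sin t, bb m s]"

lemma fs_ds: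
  assumes m: "m \<ge> 1" and s: "0 < s" "s < 1"
  shows "((\<lambda>x. fs m \<sigma> x t) has_vector_derivative vector [cos t, sin t, \<sigma> * (- integrand m s)]) (at s)"
proof -
  have "((\<lambda>x. x * cos t) has_real_derivative cos t) (at s)"
    using DERIV_cmult_right[OF DERIV_ident, of "cos t"] by simp
  moreover have "((\<lambda>x. x * sin t) has_real_derivative sin t) (at s)"
    using DERIV_cmult_right[OF DERIV_ident, of "sin t"] by simp
  moreover have "((\<lambda>x. \<sigma> * u_fun m x) has_real_derivative \<sigma> * (- integrand m s)) (at s)"
    by (rule DERIV_cmult[OF u_deriv[OF m s]])
  ultimately show ?thesis unfolding fs_def by (rule vec3_deriv)
qed

lemma fs_dv:
  shows "((\<lambda>x. fs m \<sigma> s x) has_vector_derivative vector [- s * sin t, s * cos t, 0]) (at t)"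
  unfolding fs_def by (rule vec3_deriv) (auto intro!: derivative_eq_intros)

lemma ds_val: "m \<ge> 1 \<Longrightarrow> 0 < s \<Longrightarrow> s < 1 \<Longrightarrow> d_s (fs m \<sigma>) s t = vector [cos t, sin t, \<sigma> * (- integrand m s)]"
  unfolding d_s_def by (rule vector_derivative_at[OF fs_ds])

lemma dv_val: "d_v (fs m \<sigma>) s t = vector [- s * sin t, s * cos t, 0]"
  unfolding d_v_def by (rule vector_derivative_at[OF fs_dv])

lemma lin_indep:
  fixes x1 x2 z1 z2 c S w s :: real
  assumes s: "s \<noteq> 0" and cS: "c^2 + S^2 = 1"
    and e: "x1 *\<^sub>R (vector [c, S, w] :: real^3) + x2 *\<^sub>R vector [- s * S, s * c, 0] = 
            z1 *\<^sub>R vector [c, S, w] + z2 *\<^sub>R (vector [- s * S, s * c, 0] :: real^3)"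
  shows "x1 = z1 \<and> x2 = z2"
proof -
  have e1: "x1 * c - x2 * s * S = z1 * c - z2 * s * S"
    using arg_cong[OF e, of "\<lambda>v. v$1"] by simp
  have e2: "x1 * S + x2 * s * c = z1 * S + z2 * s * c"
    using arg_cong[OF e, of "\<lambda>v. v$2"] by simp
  define d1 where "d1 = x1 - z1"
  define d2 where "d2 = x2 - z2"
  have f1: "d1 * c = d2 * s * S" using e1 by (simp add: d1_def d2_def algebra_simps)
  have f2: "d1 * S = - d2 * s * c" using e2 by (simp add: d1_def d2_def algebra_simps)
  have "d1 = d1 * (c^2 + S^2)" using cS by simp
  also have "\<dots> = (d1 * c) * c + (d1 * S) * S" by (simp add: power2_eq_square algebra_simps)
  also have "\<dots> = 0" unfolding f1 f2 by (simp add: algebra_simps)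
  finally have d1z: "d1 = 0" .
  have "d2 * s = d2 * s * (c^2 + S^2)" using cS by simp
  also have "\<dots> = (d2 * s * S) * S + (- d2 * s * c) * (- c)" by (simp add: power2_eq_square algebra_simps)
  also have "\<dots> = 0" unfolding f1[symmetric] f2[symmetric] d1z by simp
  finally have "d2 = 0" using s by simp
  then show ?thesis using d1z by (simp add: d1_def d2_def)
qed

lemma cross_val:
  assumes "m \<ge> 1" "0 < s" "s < 1"
  shows "cross3 (d_s (fs m \<sigma>) s t) (d_v (fs m \<sigma>) s t) =
     vector [\<sigma> * integrand m s * s * cos t, \<sigma> * integrand m s * s * sin t, s]"
  unfolding ds_val[OF assms] dv_val cross_calc by simp

lemma bg_eq:
  assumes m: "m \<ge> 1" and sg: "\<sigma> = 1 \<or> \<sigma> = -1" and s: "0 < s" "s < 1"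
  shows "bg_map m (fs m \<sigma>) s t = eta m \<sigma> s t"
proof -
  obtain k where k: "m = Suc k" using m by (cases m) auto
  have km: "2*m = 2*k+2" "2*m-1 = 2*k+1" "m - 1 = k" using k by auto
  note ab = ab_facts[OF m s, unfolded km]
  define a where "a = aa s"
  define b where "b = bb m s"
  define g where "g = integrand m s"
  have a0: "0 < a" and b0: "0 < b" and abe: "a^(2*k+2) + b^(2*k+2) = 1"
    and gab: "g = a^(2*k+1) / b^(2*k+1)" using ab by (auto simp: a_def b_def g_def)
  have s2: "\<sigma>^2 = 1" using sg by auto
  have cs: "(cos t)^2 + (sin t)^2 = 1" by simp
  define C where "C = (vector [\<sigma> * g * s * cos t, \<sigma> * g * s * sin t, s] :: real^3)"
  have Cv: "cross3 (d_s (fs m \<sigma>) s t) (d_v (fs m \<sigma>) s t) = C"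
    unfolding cross_val[OF m s] C_def g_def ..
  have E: "eta m \<sigma> s t = vector [\<sigma> * a * cos t, \<sigma> * a * sin t, b]"
    by (simp add: eta_def a_def b_def)
  have q: "(\<sigma> * a * cos t)^2 + (\<sigma> * a * sin t)^2 = a^2"
  proof -
    have "(\<sigma> * a * cos t)^2 + (\<sigma> * a * sin t)^2 = \<sigma>^2 * a^2 * ((cos t)^2 + (sin t)^2)"
      by (simp only: power_mult_distrib distrib_left)
    then show ?thesis using s2 by simp
  qed
  show ?thesis
    unfolding bg_map_def Cv
  proof (rule the_equality)
    show "Phi m (eta m \<sigma> s t) = 1 \<and>
      (\<exists>\<mu>>0. (Phi m has_derivative (\<lambda>h. (\<mu> *\<^sub>R C) \<bullet> h)) (at (eta m \<sigma> s t)))"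
    proof
      show "Phi m (eta m \<sigma> s t) = 1"
        unfolding E Phi_def using abe by (simp add: q power_mult[symmetric] km)
      define \<mu> where "\<mu> = 2 * real m * b^(2*k+1) / s"
      have mu0: "0 < \<mu>" using b0 s m by (simp add: \<mu>_def)
      have "gradPhi m (eta m \<sigma> s t) = \<mu> *\<^sub>R C"
      proof -
        have pa: "(a^2)^k = a^(2*k)" by (simp add: power_mult)
        have h: "(a^2)^k * (\<sigma> * a * x) = \<sigma> * (b^(2*k+1) * g) * x" for x
          unfolding pa gab using b0 by (simp add: field_simps)
        have gE: "gradPhi m (eta m \<sigma> s t) = vector [2 * real m * ((a^2)^k * (\<sigma> * a * cos t)),
             2 * real m * ((a^2)^k * (\<sigma> * a * sin t)), 2 * real m * b^(2*k+1)]"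
          unfolding E gradPhi_def vector_3 q km(2,3) by (simp only: mult.assoc)
        show ?thesis
          unfolding gE h C_def
          using s by (simp add: vec_eq_iff forall_3 \<mu>_def field_simps)
      qed
      then show "\<exists>\<mu>>0. (Phi m has_derivative (\<lambda>h. (\<mu> *\<^sub>R C) \<bullet> h)) (at (eta m \<sigma> s t))"
        using Phi_deriv[OF m, of "eta m \<sigma> s t"] mu0 by metis
    qed
  next
    fix y assume y: "Phi m y = 1 \<and> (\<exists>\<mu>>0. (Phi m has_derivative (\<lambda>h. (\<mu> *\<^sub>R C) \<bullet> h)) (at y))"
    then obtain \<mu> where mu0: "0 < \<mu>" and d: "(Phi m has_derivative (\<lambda>h. (\<mu> *\<^sub>R C) \<bullet> h)) (at y)" by blast
    have "(\<lambda>h. gradPhi m y \<bullet> h) = (\<lambda>h. (\<mu> *\<^sub>R C) \<bullet> h)"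
      by (rule has_derivative_unique[OF Phi_deriv[OF m] d])
    then have G: "gradPhi m y = \<mu> *\<^sub>R C" by (rule inner_eq_vec)
    have h1: "2 * real (Suc k) * ((y$1)^2 + (y$2)^2)^k * y$1 = \<mu> * \<sigma> * (a^(2*k+1) / b^(2*k+1)) * s * cos t"
      using arg_cong[OF G, of "\<lambda>v. v$1"] by (simp add: gradPhi_def C_def k gab mult.assoc)
    have h2: "2 * real (Suc k) * ((y$1)^2 + (y$2)^2)^k * y$2 = \<mu> * \<sigma> * (a^(2*k+1) / b^(2*k+1)) * s * sin t"
      using arg_cong[OF G, of "\<lambda>v. v$2"] by (simp add: gradPhi_def C_def k gab mult.assoc)
    have h3: "2 * real (Suc k) * (y$3)^(2*k+1) = \<mu> * s"
      using arg_cong[OF G, of "\<lambda>v. v$3"] by (simp add: gradPhi_def C_def k)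
    have P: "((y$1)^2 + (y$2)^2)^(Suc k) + (y$3)^(2*k+2) = 1"
      using y by (simp add: Phi_def k)
    have "y$1 = \<sigma> * a * cos t \<and> y$2 = \<sigma> * a * sin t \<and> y$3 = b"
      by (rule uniq_alg[OF sg a0 b0 abe mu0 s(1) cs h1 h2 h3 P])
    then show "y = eta m \<sigma> s t" unfolding E by (simp add: vec_eq_iff forall_3)
  qed
qed



lemma eta_ds:
  assumes m: "m \<ge> 1" and s: "0 < s" "s < 1"
  shows "((\<lambda>x. eta m \<sigma> x t) has_vector_derivative
     vector [\<sigma> * (- s / aa s) * cos t, \<sigma> * (- s / aa s) * sin t, s * aa s ^ (2*m-2) / bb m s ^ (2*m-1)]) (at s)"
  unfolding eta_def
  by (rule vec3_deriv[OF DERIV_cmult_right[OF DERIV_cmult[OF aa_deriv[OF s]]]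
        DERIV_cmult_right[OF DERIV_cmult[OF aa_deriv[OF s]]] bb_deriv[OF m s]])

lemma bg_ds:
  assumes m: "m \<ge> 1" and sg: "\<sigma> = 1 \<or> \<sigma> = -1" and s: "0 < s" "s < 1"
  shows "((\<lambda>x. bg_map m (fs m \<sigma>) x t) has_vector_derivative
     vector [\<sigma> * (- s / aa s) * cos t, \<sigma> * (- s / aa s) * sin t, s * aa s ^ (2*m-2) / bb m s ^ (2*m-1)]) (at s)"
  by (rule has_vector_derivative_transform_within_open[OF eta_ds[OF m s], of "{0<..<1}"])
     (use s bg_eq[OF m sg] in auto)

lemma bg_fun_t:
  assumes m: "m \<ge> 1" and sg: "\<sigma> = 1 \<or> \<sigma> = -1" and s: "0 < s" "s < 1"
  shows "(\<lambda>x. bg_map m (fs m \<sigma>) s x) = (\<lambda>x. eta m \<sigma> s x)"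
  using bg_eq[OF m sg s] by auto

lemma bg_dv:
  assumes m: "m \<ge> 1" and sg: "\<sigma> = 1 \<or> \<sigma> = -1" and s: "0 < s" "s < 1"
  shows "((\<lambda>x. bg_map m (fs m \<sigma>) s x) has_vector_derivative
     vector [- (\<sigma> * aa s * sin t), \<sigma> * aa s * cos t, 0]) (at t)"
  unfolding bg_fun_t[OF assms] eta_def
  by (rule vec3_deriv) (auto intro!: derivative_eq_intros)

lemma mat:
  assumes m: "m \<ge> 1" and sg: "\<sigma> = 1 \<or> \<sigma> = -1" and s: "0 < s" "s < 1"
  shows "dbg_matrix m (fs m \<sigma>) s t = (vector [vector [- \<sigma> * s / aa s, 0], vector [0, \<sigma> * aa s / s]] :: real^2^2)"
proof -
  define M where "M = (vector [vector [- \<sigma> * s / aa s, 0], vector [0, \<sigma> * aa s / s]] :: real^2^2)"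
  have ds1: "d_s (bg_map m (fs m \<sigma>)) s t = vector [\<sigma> * (- s / aa s) * cos t, \<sigma> * (- s / aa s) * sin t, s * aa s ^ (2*m-2) / bb m s ^ (2*m-1)]"
    unfolding d_s_def by (rule vector_derivative_at[OF bg_ds[OF assms]])
  have dv1: "d_v (bg_map m (fs m \<sigma>)) s t = vector [- (\<sigma> * aa s * sin t), \<sigma> * aa s * cos t, 0]"
    unfolding d_v_def by (rule vector_derivative_at[OF bg_dv[OF assms]])
  note ab = ab_facts[OF m s]
  have s2: "\<sigma> * \<sigma> = 1" using sg by auto
  have a2: "aa s ^ (2*m-1) = aa s * aa s ^ (2*m-2)"
    using m by (simp add: power_Suc[symmetric] Suc_diff_le[symmetric] del: power_Suc)
  have third: "s * aa s ^ (2*m-2) / bb m s ^ (2*m-1) = (- \<sigma> * s / aa s) * (\<sigma> * (- integrand m s))"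
  proof -
    have "(- \<sigma> * s / aa s) * (\<sigma> * (- integrand m s)) = (\<sigma> * \<sigma>) * s * integrand m s / aa s" by simp
    also have "\<dots> = s * aa s ^ (2*m-2) / bb m s ^ (2*m-1)"
      unfolding s2 ab(4) a2 using ab(1) by simp
    finally show ?thesis by simp
  qed
  have E1: "d_s (bg_map m (fs m \<sigma>)) s t = M$1$1 *\<^sub>R d_s (fs m \<sigma>) s t + M$2$1 *\<^sub>R d_v (fs m \<sigma>) s t"
    unfolding ds1 ds_val[OF m s] dv_val M_def using third by (simp add: vec_eq_iff forall_3)
  have E2: "d_v (bg_map m (fs m \<sigma>)) s t = M$1$2 *\<^sub>R d_s (fs m \<sigma>) s t + M$2$2 *\<^sub>R d_v (fs m \<sigma>) s t"
    unfolding dv1 ds_val[OF m s] dv_val M_def using s by (simp add: vec_eq_iff forall_3)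
  show ?thesis
    unfolding dbg_matrix_def M_def[symmetric]
  proof (rule the_equality)
    show "d_s (bg_map m (fs m \<sigma>)) s t = M$1$1 *\<^sub>R d_s (fs m \<sigma>) s t + M$2$1 *\<^sub>R d_v (fs m \<sigma>) s t \<and>
          d_v (bg_map m (fs m \<sigma>)) s t = M$1$2 *\<^sub>R d_s (fs m \<sigma>) s t + M$2$2 *\<^sub>R d_v (fs m \<sigma>) s t"
      using E1 E2 by blast
  next
    fix N :: "real^2^2"
    assume N: "d_s (bg_map m (fs m \<sigma>)) s t = N$1$1 *\<^sub>R d_s (fs m \<sigma>) s t + N$2$1 *\<^sub>R d_v (fs m \<sigma>) s t \<and>
          d_v (bg_map m (fs m \<sigma>)) s t = N$1$2 *\<^sub>R d_s (fs m \<sigma>) s t + N$2$2 *\<^sub>R d_v (fs m \<sigma>) s t"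
    have cs: "(cos t)^2 + (sin t)^2 = 1" by simp
    have sn: "s \<noteq> 0" using s by simp
    have "N$1$1 = M$1$1 \<and> N$2$1 = M$2$1"
      by (rule lin_indep[OF sn cs, where w="\<sigma> * (- integrand m s)"]) (use N E1 in \<open>simp add: ds_val[OF m s] dv_val\<close>)
    moreover have "N$1$2 = M$1$2 \<and> N$2$2 = M$2$2"
      by (rule lin_indep[OF sn cs, where w="\<sigma> * (- integrand m s)"]) (use N E2 in \<open>simp add: ds_val[OF m s] dv_val\<close>)
    ultimately show "N = M" by (simp add: vec_eq_iff forall_2)
  qed
qed

lemma curv:
  assumes m: "m \<ge> 1" and sg: "\<sigma> = 1 \<or> \<sigma> = -1" and s: "0 < s" "s < 1"
  shows "mink_gauss_curv m (fs m \<sigma>) s t = -1"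
proof -
  have a0: "aa s > 0" using ab_facts[OF m s] by simp
  have s2: "\<sigma> * \<sigma> = 1" using sg by auto
  show ?thesis
    unfolding mink_gauss_curv_def mat[OF assms] det_2 using a0 s s2
    by (simp add: field_simps)
qed


theorem mainTheorem6:
  fixes m :: nat
  assumes "m \<ge> 2"
  shows "(\<forall>\<alpha>\<in>{0<..<1}. integrand m integrable_on {\<alpha>..1})
    \<and> (u_fun m \<longlongrightarrow> 0) (at_left 1)
    \<and> (\<forall>\<alpha>\<in>{0<..<1}. u_fun m differentiable (at \<alpha>))
    \<and> (deriv (u_fun m) \<longlongrightarrow> 0) (at_left 1)
    \<and> filterlim (u_fun m) at_top (at_right 0)
    \<and> (\<forall>\<sigma>\<in>{1, -1::real}. \<forall>\<alpha>\<in>{0<..<1}. \<forall>v::real.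
         let f = (\<lambda>s t. vector [s * cos t, s * sin t, \<sigma> * u_fun m s] :: real^3) in
           (\<lambda>t. f t v) differentiable (at \<alpha>) \<and> (\<lambda>t. f \<alpha> t) differentiable (at v)
           \<and> cross3 (d_s f \<alpha> v) (d_v f \<alpha> v) \<noteq> 0
           \<and> (\<lambda>t. bg_map m f t v) differentiable (at \<alpha>)
           \<and> (\<lambda>t. bg_map m f \<alpha> t) differentiable (at v)
           \<and> mink_gauss_curv m f \<alpha> v = -1)"
proof -
  have m: "m \<ge> 1" using assms by simp
  have P1: "\<forall>\<alpha>\<in>{0<..<1}. integrand m integrable_on {\<alpha>..1}"
    using integrand_int[OF m] by auto
  have P3: "\<forall>\<alpha>\<in>{0<..<1}. u_fun m differentiable (at \<alpha>)"
  proof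
    fix \<alpha> :: real assume "\<alpha> \<in> {0<..<1}"
    then have "(u_fun m has_real_derivative - integrand m \<alpha>) (at \<alpha>)" using u_deriv[OF m] by auto
    then show "u_fun m differentiable (at \<alpha>)"
      by (auto simp: differentiable_def has_field_derivative_def)
  qed
  have P6: "\<forall>\<sigma>\<in>{1, -1::real}. \<forall>\<alpha>\<in>{0<..<1}. \<forall>v::real.
         let f = (\<lambda>s t. vector [s * cos t, s * sin t, \<sigma> * u_fun m s] :: real^3) in
           (\<lambda>t. f t v) differentiable (at \<alpha>) \<and> (\<lambda>t. f \<alpha> t) differentiable (at v)
           \<and> cross3 (d_s f \<alpha> v) (d_v f \<alpha> v) \<noteq> 0
           \<and> (\<lambda>t. bg_map m f t v) differentiable (at \<alpha>)
           \<and> (\<lambda>t. bg_map m f \<alpha> t) differentiable (at v)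
           \<and> mink_gauss_curv m f \<alpha> v = -1"
  proof (intro ballI allI)
    fix \<sigma> \<alpha> v :: real
    assume sg: "\<sigma> \<in> {1, -1}" and a: "\<alpha> \<in> {0<..<1}"
    have sg': "\<sigma> = 1 \<or> \<sigma> = -1" using sg by auto
    have a': "0 < \<alpha>" "\<alpha> < 1" using a by auto
    have fsX: "(\<lambda>s t. vector [s * cos t, s * sin t, \<sigma> * u_fun m s] :: real^3) = fs m \<sigma>"
      by (simp add: fs_def)
    have cr: "cross3 (d_s (fs m \<sigma>) \<alpha> v) (d_v (fs m \<sigma>) \<alpha> v) \<noteq> 0"
    proof
      assume "cross3 (d_s (fs m \<sigma>) \<alpha> v) (d_v (fs m \<sigma>) \<alpha> v) = 0"
      then have "(cross3 (d_s (fs m \<sigma>) \<alpha> v) (d_v (fs m \<sigma>) \<alpha> v))$3 = 0" by simp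
      then show False unfolding cross_val[OF m a'] using a' by simp
    qed
    show "let f = (\<lambda>s t. vector [s * cos t, s * sin t, \<sigma> * u_fun m s] :: real^3) in
           (\<lambda>t. f t v) differentiable (at \<alpha>) \<and> (\<lambda>t. f \<alpha> t) differentiable (at v)
           \<and> cross3 (d_s f \<alpha> v) (d_v f \<alpha> v) \<noteq> 0
           \<and> (\<lambda>t. bg_map m f t v) differentiable (at \<alpha>)
           \<and> (\<lambda>t. bg_map m f \<alpha> t) differentiable (at v)
           \<and> mink_gauss_curv m f \<alpha> v = -1"
      unfolding fsX Let_def
      using differentiableI_vector[OF fs_ds[OF m a', of \<sigma> v]]
        differentiableI_vector[OF fs_dv[of m \<sigma> \<alpha> v]] cr
        differentiableI_vector[OF bg_ds[OF m sg' a', of v]]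
        differentiableI_vector[OF bg_dv[OF m sg' a', of v]]
        curv[OF m sg' a', of v]
      by blast
  qed
  show ?thesis
    using P1 u_lim1[OF m] P3 deriv_lim1[OF m] u_lim0[OF m] P6 by blast
qed

end
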